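(* Let $n\geq 4$ and let $\tau: T_n\to \mathrm{GL}_{n+1}(\mathbb{C})$ be a homogeneous $3$-local representation of the twin group $T_n$. Then $\tau$ is reducible.
   Context: The twin group $T_n$ ($n\geq 2$) is the group with generators $s_1,\dots,s_{n-1}$ and defining relations $s_i^2=1$ for $1\leq i\leq n-1$ and $s_is_j=s_js_i$ for $|i-j|\geq 2$. A representation $\tau:T_n\to\mathrm{GL}_{n+1}(\mathbb{C})$ is called homogeneous $3$-local if there is a single matrix $M\in\mathrm{GL}_3(\mathbb{C})$ such that $\tau(s_i)=\mathrm{diag}(I_{i-1},M,I_{n-i-1})$ (block-diagonal, with $I_r$ the $r\times r$ identity) for all $1\leq i\leq n-1$. A representation on $\mathbb{C}^{m}$ is reducible if there is a subspace $0\neq U\neq\mathbb{C}^m$ invariant under all images of the group. *)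

theory Defs
  imports "Jordan_Normal_Form.Matrix"
begin

text \<open>The (n+1)x(n+1) matrix diag(I_{i-1}, M, I_{n-i-1}) for 1 <= i <= n-1 and M a 3x3 matrix.
  Rows/columns are 0-indexed, so the block M occupies indices i-1, i, i+1.\<close>
definition local_mat :: "nat \<Rightarrow> complex mat \<Rightarrow> nat \<Rightarrow> complex mat" where
  "local_mat n M i = mat (n+1) (n+1) (\<lambda>(r,c).
     if i - 1 \<le> r \<and> r \<le> i + 1 \<and> i - 1 \<le> c \<and> c \<le> i + 1
     then M $$ (r - (i - 1), c - (i - 1))
     else if r = c then 1 else 0)"

definition twin_rep :: "nat \<Rightarrow> (nat \<Rightarrow> complex mat) \<Rightarrow> bool" where
  "twin_rep n A \<longleftrightarrow>
     (\<forall>i\<in>{1..n-1}. A i \<in> carrier_mat (n+1) (n+1) \<and> A i * A i = 1\<^sub>m (n+1)) \<and>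
     (\<forall>i\<in>{1..n-1}. \<forall>j\<in>{1..n-1}. (i + 2 \<le> j \<or> j + 2 \<le> i) \<longrightarrow> A i * A j = A j * A i)"

definition homogeneous_3_local :: "nat \<Rightarrow> (nat \<Rightarrow> complex mat) \<Rightarrow> bool" where
  "homogeneous_3_local n A \<longleftrightarrow>
     (\<exists>M \<in> carrier_mat 3 3. invertible_mat M \<and> (\<forall>i\<in>{1..n-1}. A i = local_mat n M i))"

definition is_subspace :: "nat \<Rightarrow> complex vec set \<Rightarrow> bool" where
  "is_subspace m U \<longleftrightarrow> U \<subseteq> carrier_vec m \<and> 0\<^sub>v m \<in> U \<and>
     (\<forall>u\<in>U. \<forall>v\<in>U. u + v \<in> U) \<and> (\<forall>c. \<forall>u\<in>U. c \<cdot>\<^sub>v u \<in> U)"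

text \<open>Reducible: a proper nonzero subspace of C^(n+1) invariant under all generator images
  (equivalently, under the whole image of the group).\<close>
definition twin_reducible :: "nat \<Rightarrow> (nat \<Rightarrow> complex mat) \<Rightarrow> bool" where
  "twin_reducible n A \<longleftrightarrow> (\<exists>U. is_subspace (n+1) U \<and> U \<noteq> {0\<^sub>v (n+1)} \<and> U \<noteq> carrier_vec (n+1) \<and>
     (\<forall>i\<in>{1..n-1}. \<forall>u\<in>U. A i *\<^sub>v u \<in> U))"

end

theory Submission
  imports Defs
begin

lemma local_mat_dims[simp]: "dim_row (local_mat n M i) = n+1" "dim_col (local_mat n M i) = n+1"
  by (auto simp: local_mat_def)

lemma local_mat_out:
  assumes "r \<le> n" "k \<le> n" "\<not> (i-1 \<le> k \<and> k \<le> i+1)"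
  shows "local_mat n M i $$ (r,k) = (if r = k then 1 else 0)"
  using assms unfolding local_mat_def by auto

lemma local_mat_out2:
  assumes "r \<le> n" "k \<le> n" "\<not> (i-1 \<le> r \<and> r \<le> i+1)"
  shows "local_mat n M i $$ (r,k) = (if r = k then 1 else 0)"
  using assms unfolding local_mat_def by auto

lemma local_mat_in:
  assumes "r \<le> n" "k \<le> n" "i-1 \<le> r \<and> r \<le> i+1" "i-1 \<le> k \<and> k \<le> i+1"
  shows "local_mat n M i $$ (r,k) = M $$ (r-(i-1), k-(i-1))"
  using assms unfolding local_mat_def by auto

lemma local_mat_mult_vec:
  assumes "1 \<le> i" "i + 1 \<le> n" "r \<le> n" "dim_vec u = n+1"
  shows "(local_mat n M i *\<^sub>v u) $ r = (if i-1 \<le> r \<and> r \<le> i+1 then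
     M$$(r-(i-1),0)*u$(i-1) + M$$(r-(i-1),1)*u$i + M$$(r-(i-1),2)*u$(i+1) else u$r)"
proof -
  let ?f = "\<lambda>k. local_mat n M i $$ (r,k) * u $ k"
  have eq: "(local_mat n M i *\<^sub>v u) $ r = sum ?f {0..<n+1}"
    using assms by (simp add: scalar_prod_def)
  show ?thesis
  proof (cases "i-1 \<le> r \<and> r \<le> i+1")
    case True
    have "sum ?f {0..<n+1} = sum ?f {i-1, i, i+1}"
    proof (rule sum.mono_neutral_right)
      show "\<forall>k\<in>{0..<n + 1} - {i - 1, i, i + 1}. ?f k = 0"
      proof
        fix k assume k: "k \<in> {0..<n + 1} - {i - 1, i, i + 1}"
        hence "\<not> (i-1 \<le> k \<and> k \<le> i+1)" by auto
        hence "local_mat n M i $$ (r,k) = (if r = k then 1 else 0)"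
          using k assms by (intro local_mat_out) auto
        thus "?f k = 0" using k True by auto
      qed
    qed (use assms in auto)
    also have "\<dots> = ?f (i-1) + ?f i + ?f (i+1)"
      using assms by (cases i) (auto simp: add.assoc)
    also have "\<dots> = M$$(r-(i-1),0)*u$(i-1) + M$$(r-(i-1),1)*u$i + M$$(r-(i-1),2)*u$(i+1)"
      using assms True by (simp add: local_mat_in)
    finally show ?thesis using True \<open>(local_mat n M i *\<^sub>v u) $ r = _\<close> by simp
  next
    case False
    have "sum ?f {0..<n+1} = sum ?f {r}"
      by (rule sum.mono_neutral_right) (use assms False in \<open>auto simp: local_mat_out2\<close>)
    also have "\<dots> = u $ r" using assms False by (simp add: local_mat_out2)
    finally have "(local_mat n M i *\<^sub>v u) $ r = u $ r" using eq by simp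
    thus ?thesis using False by (simp only: if_False)
  qed
qed

lemma mult_entry:
  assumes "1 \<le> i" "i + 1 \<le> n" "r \<le> n" "c \<le> n" "dim_row B = n+1" "dim_col B = n+1"
  shows "(local_mat n M i * B) $$ (r,c) = (if i-1 \<le> r \<and> r \<le> i+1 then
     M$$(r-(i-1),0)*B$$(i-1,c) + M$$(r-(i-1),1)*B$$(i,c) + M$$(r-(i-1),2)*B$$(i+1,c) else B$$(r,c))"
proof -
  have "(local_mat n M i * B) $$ (r,c) = (local_mat n M i *\<^sub>v col B c) $ r"
    using assms by simp
  also have "\<dots> = (if i-1 \<le> r \<and> r \<le> i+1 then
     M$$(r-(i-1),0)*col B c$(i-1) + M$$(r-(i-1),1)*col B c$i + M$$(r-(i-1),2)*col B c$(i+1) else col B c$r)"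
    using assms by (intro local_mat_mult_vec) auto
  also have "\<dots> = (if i-1 \<le> r \<and> r \<le> i+1 then
     M$$(r-(i-1),0)*B$$(i-1,c) + M$$(r-(i-1),1)*B$$(i,c) + M$$(r-(i-1),2)*B$$(i+1,c) else B$$(r,c))"
    using assms by auto
  finally show ?thesis .
qed

lemma subspace_U0: "is_subspace (n+1) {v :: complex vec. v \<in> carrier_vec (n+1) \<and> (\<forall>j. 1 \<le> j \<and> j \<le> n \<longrightarrow> v$j = 0)}"
  unfolding is_subspace_def by auto

lemma subspace_U1: "is_subspace (n+1) {v :: complex vec. v \<in> carrier_vec (n+1) \<and> v$n = 0}"
  unfolding is_subspace_def by auto

lemma neq_single: "x \<in> U \<Longrightarrow> x \<noteq> z \<Longrightarrow> U \<noteq> {z}" by auto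
lemma neq_set: "x \<notin> U \<Longrightarrow> x \<in> C \<Longrightarrow> U \<noteq> C" by auto

theorem theorem3p2:
  fixes n :: nat and A :: "nat \<Rightarrow> complex mat"
  assumes "n \<ge> 4" and "twin_rep n A" and "homogeneous_3_local n A"
  shows "twin_reducible n A"
proof -
  obtain M where M: "M \<in> carrier_mat 3 3" and AM: "\<And>i. i\<in>{1..n-1} \<Longrightarrow> A i = local_mat n M i"
    using assms(3) unfolding homogeneous_3_local_def by blast
  have "A 1 * A 3 = A 3 * A 1"
    using assms(2,1) unfolding twin_rep_def by auto
  hence comm: "local_mat n M 1 * local_mat n M 3 = local_mat n M 3 * local_mat n M 1"
    using AM[of 1] AM[of 3] assms(1) by auto
  let ?L1 = "local_mat n M 1" and ?L3 = "local_mat n M 3"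
  have e1: "(?L1 * ?L3) $$ (0,4) = M$$(0,2) * M$$(0,2)"
    using assms(1) by (subst mult_entry) (auto simp: local_mat_def)
  have e2: "(?L3 * ?L1) $$ (0,4) = 0"
    using assms(1) by (subst mult_entry) (auto simp: local_mat_def)
  have e3: "(?L1 * ?L3) $$ (4,0) = 0"
    using assms(1) by (subst mult_entry) (auto simp: local_mat_def)
  have e4: "(?L3 * ?L1) $$ (4,0) = M$$(2,0) * M$$(2,0)"
    using assms(1) by (subst mult_entry) (auto simp: local_mat_def)
  have e5: "(?L1 * ?L3) $$ (3,1) = 0"
    using assms(1) by (subst mult_entry) (auto simp: local_mat_def)
  have e6: "(?L3 * ?L1) $$ (3,1) = M$$(1,0) * M$$(2,1)"
    using assms(1) by (subst mult_entry) (auto simp: local_mat_def)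
  have m02: "M$$(0,2) = 0" using e1 e2 comm by simp
  have m20: "M$$(2,0) = 0" using e3 e4 comm by simp
  have m1021: "M$$(1,0) * M$$(2,1) = 0" using e5 e6 comm by simp
  show ?thesis
  proof (cases "M$$(1,0) = 0")
    case True
    let ?U = "{v :: complex vec. v \<in> carrier_vec (n+1) \<and> (\<forall>j. 1 \<le> j \<and> j \<le> n \<longrightarrow> v$j = 0)}"
    have inv: "\<forall>i\<in>{1..n-1}. \<forall>u\<in>?U. A i *\<^sub>v u \<in> ?U"
    proof (intro ballI)
      fix i u assume i: "i \<in> {1..n-1}" and u: "u \<in> ?U"
      have "(A i *\<^sub>v u) $ j = 0" if j: "1 \<le> j" "j \<le> n" for j
      proof -
        have h: "(local_mat n M i *\<^sub>v u) $ j = (if i-1 \<le> j \<and> j \<le> i+1 then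
          M$$(j-(i-1),0)*u$(i-1) + M$$(j-(i-1),1)*u$i + M$$(j-(i-1),2)*u$(i+1) else u$j)"
          by (rule local_mat_mult_vec) (use i j u in auto)
        have uj: "\<And>k. 1 \<le> k \<Longrightarrow> k \<le> n \<Longrightarrow> u $ k = 0" using u by blast
        have hA: "(A i *\<^sub>v u) $ j = (local_mat n M i *\<^sub>v u) $ j" using AM[OF i] by simp
        show ?thesis
        proof (cases "i = 1")
          case True
          have h1: "(local_mat n M i *\<^sub>v u) $ j = (if j \<le> 2 then
            M$$(j,0)*u$0 + M$$(j,1)*u$1 + M$$(j,2)*u$2 else u$j)"
            using h True by (simp add: numeral_2_eq_2)
          have u1: "u$1 = 0" and u2: "u$2 = 0" using uj assms(1) by auto
          have "j = 1 \<or> j = 2 \<or> j > 2" using j by auto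
          moreover have ?thesis if "j = 1" using hA h1 that u1 u2 \<open>M$$(1,0) = 0\<close> by simp
          moreover have ?thesis if "j = 2" using hA h1 that u1 u2 m20 by simp
          moreover have ?thesis if "j > 2" using hA h1 that uj j by simp
          ultimately show ?thesis by blast
        next
          case False
          hence "i \<ge> 2" using i by auto
          hence "u$(i-1) = 0" "u$i = 0" "u$(i+1) = 0" "u$j = 0" using uj i j by auto
          then show ?thesis using h hA by simp
        qed
      qed
      hence zs: "\<forall>j. 1 \<le> j \<and> j \<le> n \<longrightarrow> (A i *\<^sub>v u) $ j = 0" by blast
      have "dim_vec (A i *\<^sub>v u) = n+1" using AM[OF i] by simp
      hence cv: "A i *\<^sub>v u \<in> carrier_vec (n+1)" unfolding carrier_vec_def by (rule CollectI)
      show "A i *\<^sub>v u \<in> ?U" unfolding mem_Collect_eq by (intro conjI cv zs)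
    qed
    have a1: "unit_vec (n+1) 0 \<in> ?U" by auto
    have a2: "unit_vec (n+1) 0 \<noteq> 0\<^sub>v (n+1)" 
      by (metis index_unit_vec(1) index_zero_vec(1) zero_less_Suc zero_neq_one add.commute Suc_eq_plus1)
    have a3: "unit_vec (n+1) 1 \<in> carrier_vec (n+1)" by simp
    have a4: "unit_vec (n+1) 1 \<notin> ?U" using assms(1) by auto
    have ne: "?U \<noteq> {0\<^sub>v (n+1)}" by (rule neq_single[OF a1 a2])
    have nec: "?U \<noteq> carrier_vec (n+1)" by (rule neq_set[OF a4 a3])
    show ?thesis unfolding twin_reducible_def
      by (intro exI[of _ ?U] conjI) (fact subspace_U0[of n], fact ne, fact nec, fact inv)
  next
    case False
    hence m21: "M$$(2,1) = 0" using m1021 by simp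
    let ?U = "{v :: complex vec. v \<in> carrier_vec (n+1) \<and> v$n = 0}"
    have inv: "\<forall>i\<in>{1..n-1}. \<forall>u\<in>?U. A i *\<^sub>v u \<in> ?U"
    proof (intro ballI)
      fix i u assume i: "i \<in> {1..n-1}" and u: "u \<in> ?U"
      have "(A i *\<^sub>v u) $ n = 0"
      proof -
        have h: "(local_mat n M i *\<^sub>v u) $ n = (if i-1 \<le> n \<and> n \<le> i+1 then
          M$$(n-(i-1),0)*u$(i-1) + M$$(n-(i-1),1)*u$i + M$$(n-(i-1),2)*u$(i+1) else u$n)"
          by (rule local_mat_mult_vec) (use i u in auto)
        have un: "u $ n = 0" using u by blast
        have hA: "(A i *\<^sub>v u) $ n = (local_mat n M i *\<^sub>v u) $ n" using AM[OF i] by simp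
        show ?thesis
        proof (cases "i + 1 = n")
          case True
          have d: "n - (i - 1) = 2" using i True by auto
          have c: "i-1 \<le> n \<and> n \<le> i+1" using True by auto
          have "(local_mat n M i *\<^sub>v u) $ n = M$$(2,0)*u$(i-1) + M$$(2,1)*u$i + M$$(2,2)*u$(i+1)"
            unfolding h if_P[OF c] d by (rule refl)
          then show ?thesis using hA un m20 m21 True by (simp only: mult_zero_left mult_zero_right add_0)
        next
          case False
          hence nc: "\<not> (i-1 \<le> n \<and> n \<le> i+1)" using i by auto
          have "(local_mat n M i *\<^sub>v u) $ n = u $ n" unfolding h if_not_P[OF nc] by (rule refl)
          then show ?thesis using hA un by (simp only:)
        qed
      qed
      note zs = this
      have "dim_vec (A i *\<^sub>v u) = n+1" using AM[OF i] by simp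
      hence cv: "A i *\<^sub>v u \<in> carrier_vec (n+1)" unfolding carrier_vec_def by (rule CollectI)
      show "A i *\<^sub>v u \<in> ?U" unfolding mem_Collect_eq by (intro conjI cv zs)
    qed
    have a1: "unit_vec (n+1) 0 \<in> ?U" using assms(1) by auto
    have a2: "unit_vec (n+1) 0 \<noteq> 0\<^sub>v (n+1)" 
      by (metis index_unit_vec(1) index_zero_vec(1) zero_less_Suc zero_neq_one add.commute Suc_eq_plus1)
    have a3: "unit_vec (n+1) n \<in> carrier_vec (n+1)" by simp
    have a4: "unit_vec (n+1) n \<notin> ?U" by auto
    have ne: "?U \<noteq> {0\<^sub>v (n+1)}" by (rule neq_single[OF a1 a2])
    have nec: "?U \<noteq> carrier_vec (n+1)" by (rule neq_set[OF a4 a3])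
    show ?thesis unfolding twin_reducible_def
      by (intro exI[of _ ?U] conjI) (fact subspace_U1[of n], fact ne, fact nec, fact inv)
  qed
qed

end
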